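(* Let $M>0$ and $0\le\alpha<1$, and let $r_0=r_0(\alpha)$ be the real root in $(0,1)$ of the equation \[M(1-\alpha+\alpha r)=(1+M)(1-\alpha)(1-r)^2.\] Let $\mathcal{F}$ be the class of analytic functions $f(z)=z+\sum_{n\ge2}a_nz^n$ on $\mathbb{D}$ with $|a_n|\le M$ for all $n\ge2$. Then every $f\in\mathcal{F}$ satisfies $\left|\frac{zf'(z)}{f(z)}-1\right|\le1-\alpha$ for $|z|\le r_0$; $r_0(\alpha)$ is the radius of starlikeness of order $\alpha$ of $\mathcal{F}$; and $r_0(1/2)$ is the radius of parabolic starlikeness of $\mathcal{F}$. All results are sharp (in particular $r_0$ in the first statement cannot be replaced by any larger number).
   Context: $\mathbb{D}=\{z\in\mathbb{C}:|z|<1\}$. For a class $\mathcal{F}$ of analytic functions on $\mathbb{D}$ normalized by $f(0)=0$, $f'(0)=1$, and $0\le\alpha<1$, the radius of starlikeness of order $\alpha$ of $\mathcal{F}$ is the supremum of $r\in(0,1]$ such that every $f\in\mathcal{F}$ satisfies $f(z)\ne0$ for $0<|z|<r$ and $\operatorname{Re}\big(zf'(z)/f(z)\big)>\alpha$ for $|z|<r$ (the quotient being $1$ at $z=0$). The radius of parabolic starlikeness of $\mathcal{F}$ is the supremum of $r\in(0,1]$ such that every $f\in\mathcal{F}$ satisfies $\operatorname{Re}\big(zf'(z)/f(z)\big)>\left|zf'(z)/f(z)-1\right|$ for $|z|<r$. *)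

theory Defs
  imports "HOL-Analysis.Analysis"
begin

definition starq :: "(complex \<Rightarrow> complex) \<Rightarrow> complex \<Rightarrow> complex" where
  "starq f z = (if z = 0 then 1 else z * deriv f z / f z)"

definition coeff_bounded_class :: "real \<Rightarrow> (complex \<Rightarrow> complex) set" where
  "coeff_bounded_class M =
     {f. f holomorphic_on ball 0 1 \<and> f 0 = 0 \<and> deriv f 0 = 1 \<and>
         (\<forall>n\<ge>2. norm ((deriv ^^ n) f 0 / of_nat (fact n)) \<le> M)}"

definition radius_starlike :: "real \<Rightarrow> (complex \<Rightarrow> complex) set \<Rightarrow> real" where
  "radius_starlike \<alpha> F = Sup {r. 0 < r \<and> r \<le> 1 \<and>
      (\<forall>f\<in>F. (\<forall>z. 0 < norm z \<and> norm z < r \<longrightarrow> f z \<noteq> 0) \<and>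
              (\<forall>z. norm z < r \<longrightarrow> Re (starq f z) > \<alpha>))}"

definition radius_parabolic :: "(complex \<Rightarrow> complex) set \<Rightarrow> real" where
  "radius_parabolic F = Sup {r. 0 < r \<and> r \<le> 1 \<and>
      (\<forall>f\<in>F. \<forall>z. norm z < r \<longrightarrow> Re (starq f z) > norm (starq f z - 1))}"

end

theory Submission imports Defs "HOL-Complex_Analysis.Complex_Analysis" begin

lemma sums_norm_bound:
  fixes c :: "nat \<Rightarrow> complex"
  assumes "c sums A" "d sums D" "\<And>n. norm (c n) \<le> d n"
  shows "norm A \<le> D"
proof -
  have "norm (suminf c) \<le> suminf d"
    using assms by (intro norm_suminf_le) (auto simp: sums_iff)
  thus ?thesis using assms by (simp add: sums_iff)
qed

lemma key:
  assumes f: "f \<in> coeff_bounded_class M" and z: "z \<noteq> 0" "(1+M) * norm z < 1" and M: "M \<ge> 0"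
  shows "f z \<noteq> 0 \<and> norm (starq f z - 1) \<le> M * norm z / ((1 - norm z) * (1 - norm z - M * norm z))"
proof -
  define \<rho> where "\<rho> = norm z"
  have r0: "0 < \<rho>" using z by (simp add: \<rho>_def)
  have r2: "1 - \<rho> - M * \<rho> > 0" using z(2) by (simp add: \<rho>_def algebra_simps)
  have "M * \<rho> \<ge> 0" using M r0 by simp
  hence r1: "\<rho> < 1" using r2 by linarith
  note \<rho> = r0 r1 r2
  have holo: "f holomorphic_on ball 0 1" and f0: "f 0 = 0" and f1: "deriv f 0 = 1"
    and bnd: "\<And>n. n \<ge> 2 \<Longrightarrow> norm ((deriv ^^ n) f 0 / of_nat (fact n)) \<le> M"
    using f by (auto simp: coeff_bounded_class_def)
  define a where "a n = (deriv ^^ n) f 0 / fact n" for n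
  have a0: "a 0 = 0" and a1: "a 1 = 1" using f0 f1 by (auto simp: a_def)
  have abnd: "norm (a (Suc (Suc n))) \<le> M" for n
  proof -
    have "norm ((deriv ^^ Suc (Suc n)) f 0 / of_nat (fact (Suc (Suc n)))) \<le> M" by (rule bnd) simp
    thus ?thesis unfolding a_def of_nat_fact .
  qed
  have zb: "z \<in> ball 0 1" using \<rho> by (simp add: \<rho>_def)
  have s1: "(\<lambda>n. a n * z^n) sums f z"
    using holomorphic_power_series[OF holo zb] by (simp add: a_def)
  have hd: "deriv f holomorphic_on ball 0 1" by (rule holomorphic_deriv[OF holo open_ball])
  have s2: "(\<lambda>n. (deriv ^^ n) (deriv f) 0 / fact n * z^n) sums deriv f z"
    using holomorphic_power_series[OF hd zb] by simp
  have co: "(deriv ^^ n) (deriv f) 0 / fact n = of_nat (Suc n) * a (Suc n)" for n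
  proof -
    have "(deriv ^^ n) (deriv f) = (deriv ^^ Suc n) f" by (simp add: funpow_swap1)
    have fs: "(fact (Suc n) :: complex) = of_nat (Suc n) * fact n" by simp
    have "of_nat (Suc n) * a (Suc n) = of_nat (Suc n) * ((deriv ^^ Suc n) f 0 / (of_nat (Suc n) * fact n))"
      unfolding a_def fs ..
    also have "\<dots> = (deriv ^^ Suc n) f 0 / fact n"
      by (simp del: of_nat_Suc funpow.simps)
    finally show ?thesis using \<open>(deriv ^^ n) (deriv f) = _\<close> by simp
  qed
  have s2': "(\<lambda>n. of_nat (Suc n) * a (Suc n) * z^n) sums deriv f z"
    using s2 by (simp add: co)
  have "(\<lambda>n. a (Suc n) * z^(Suc n)) sums (f z)"
    by (subst sums_Suc_iff) (use s1 in \<open>simp add: a0\<close>)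
  hence "(\<lambda>n. a (Suc (Suc n)) * z^(Suc (Suc n))) sums (f z - z)"
    by (subst sums_Suc_iff) (simp add: a1[unfolded One_nat_def])
  hence "(\<lambda>n. a (Suc (Suc n)) * z^(Suc (Suc n)) / z) sums ((f z - z) / z)"
    by (rule sums_divide)
  hence sA: "(\<lambda>n. a (Suc (Suc n)) * z^(Suc n)) sums ((f z - z) / z)"
    using z by simp
  have sD: "(\<lambda>n. of_nat (Suc (Suc n)) * a (Suc (Suc n)) * z^(Suc n)) sums (deriv f z - 1)"
    by (subst sums_Suc_iff) (use s2' in \<open>simp add: a1[unfolded One_nat_def]\<close>)
  define A where "A = (f z - z) / z"
  define B where "B = deriv f z - 1 - A"
  have sB: "(\<lambda>n. of_nat (Suc n) * a (Suc (Suc n)) * z^(Suc n)) sums B"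
    using sums_diff[OF sD sA] unfolding B_def A_def by (simp add: algebra_simps)
  have gA: "(\<lambda>n. M * \<rho> * \<rho>^n) sums (M * \<rho> * (1 / (1 - \<rho>)))"
    using geometric_sums[of \<rho>] \<rho> by (intro sums_mult) auto
  have gB: "(\<lambda>n. M * \<rho> * (of_nat (Suc n) * \<rho>^n)) sums (M * \<rho> * (1 / (1 - \<rho>)^2))"
    using geometric_deriv_sums[of \<rho>] \<rho> by (intro sums_mult) auto
  have nA: "norm A \<le> M * \<rho> * (1 / (1 - \<rho>))"
  proof (rule sums_norm_bound[OF sA[folded A_def] gA])
    fix n
    have "norm (a (Suc (Suc n)) * z ^ Suc n) = norm (a (Suc (Suc n))) * \<rho> ^ Suc n"
      by (simp add: norm_mult norm_power \<rho>_def)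
    also have "\<dots> \<le> M * \<rho> ^ Suc n" using abnd \<rho> by (intro mult_right_mono) auto
    finally show "norm (a (Suc (Suc n)) * z ^ Suc n) \<le> M * \<rho> * \<rho> ^ n" by simp
  qed
  have nB: "norm B \<le> M * \<rho> * (1 / (1 - \<rho>)^2)"
  proof (rule sums_norm_bound[OF sB gB])
    fix n
    have "norm (of_nat (Suc n) * a (Suc (Suc n)) * z ^ Suc n) = of_nat (Suc n) * (norm (a (Suc (Suc n))) * \<rho> ^ Suc n)"
      unfolding norm_mult norm_power norm_of_nat \<rho>_def by simp
    also have "\<dots> \<le> of_nat (Suc n) * (M * \<rho> ^ Suc n)" using abnd \<rho>
      by (intro mult_left_mono mult_right_mono) auto
    finally show "norm (of_nat (Suc n) * a (Suc (Suc n)) * z ^ Suc n) \<le> M * \<rho> * (of_nat (Suc n) * \<rho> ^ n)"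
      by (simp add: algebra_simps)
  qed
  have fz: "f z = z * (1 + A)" using z by (simp add: A_def field_simps)
  have dz: "deriv f z = 1 + A + B" by (simp add: B_def)
  have l: "(1 - \<rho> - M * \<rho>) / (1 - \<rho>) \<le> norm (1 + A)"
  proof -
    have "(1 - \<rho> - M * \<rho>) / (1 - \<rho>) = 1 - M * \<rho> * (1 / (1 - \<rho>))"
      using \<rho> by (simp add: field_simps)
    also have "\<dots> \<le> 1 - norm A" using nA by simp
    also have "\<dots> \<le> norm (1 + A)" using norm_triangle_ineq2[of 1 "-A"] by simp
    finally show ?thesis .
  qed
  have pos: "0 < (1 - \<rho> - M * \<rho>) / (1 - \<rho>)" using \<rho> by simp
  hence A0: "1 + A \<noteq> 0" using l by auto
  have fnz: "f z \<noteq> 0" using fz A0 z by simp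
  have "starq f z = (1 + A + B) / (1 + A)"
    using z by (simp add: starq_def fz dz)
  hence "starq f z - 1 = B / (1 + A)"
    using A0 by (simp add: field_simps)
  hence "norm (starq f z - 1) = norm B / norm (1 + A)" by (simp add: norm_divide)
  also have "\<dots> \<le> (M * \<rho> * (1 / (1 - \<rho>)^2)) / ((1 - \<rho> - M * \<rho>) / (1 - \<rho>))"
    using nB l pos M \<rho> by (intro frac_le) auto
  also have "\<dots> = M * \<rho> / ((1 - \<rho>) * (1 - \<rho> - M * \<rho>))"
  proof -
    have n1: "1 - \<rho> \<noteq> 0" "1 - \<rho> - M * \<rho> \<noteq> 0" using \<rho> by auto
    show ?thesis using n1 by (simp add: divide_simps power2_eq_square)
  qed
  finally show ?thesis using fnz by (simp add: \<rho>_def)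
qed

definition phi :: "real \<Rightarrow> real \<Rightarrow> real" where
  "phi M \<rho> = M * \<rho> / ((1 - \<rho>) * (1 - \<rho> - M * \<rho>))"

lemma phi_cmp:
  assumes "0 < \<rho>" "(1+M) * \<rho> < 1" "M \<ge> 0"
  shows "phi M \<rho> \<le> c \<longleftrightarrow> M * \<rho> \<le> c * ((1 - \<rho>) * (1 - \<rho> - M * \<rho>))"
    and "phi M \<rho> < c \<longleftrightarrow> M * \<rho> < c * ((1 - \<rho>) * (1 - \<rho> - M * \<rho>))"
proof -
  have "M * \<rho> \<ge> 0" using assms by simp
  moreover have d2: "1 - \<rho> - M * \<rho> > 0" using assms(2) by (simp add: algebra_simps)
  ultimately have d1: "1 - \<rho> > 0" by linarith
  have D: "(1 - \<rho>) * (1 - \<rho> - M * \<rho>) > 0" using d1 d2 by (rule mult_pos_pos)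
  show "phi M \<rho> \<le> c \<longleftrightarrow> M * \<rho> \<le> c * ((1 - \<rho>) * (1 - \<rho> - M * \<rho>))"
    unfolding phi_def using D by (simp add: pos_divide_le_eq)
  show "phi M \<rho> < c \<longleftrightarrow> M * \<rho> < c * ((1 - \<rho>) * (1 - \<rho> - M * \<rho>))"
    unfolding phi_def using D by (simp add: pos_divide_less_eq)
qed

lemma root:
  assumes M: "M > 0" and a: "0 \<le> \<alpha>" "\<alpha> < 1" and r: "0 < r0" "r0 < 1"
    and eq: "M * (1 - \<alpha> + \<alpha> * r0) = (1 + M) * (1 - \<alpha>) * (1 - r0)^2"
  shows "(1+M) * r0 < 1"
    and "\<And>\<rho>. 0 < \<rho> \<Longrightarrow> \<rho> \<le> r0 \<Longrightarrow> phi M \<rho> \<le> 1 - \<alpha>"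
    and "\<And>\<rho>. 0 < \<rho> \<Longrightarrow> \<rho> < r0 \<Longrightarrow> phi M \<rho> < 1 - \<alpha>"
    and "\<And>\<rho>. r0 < \<rho> \<Longrightarrow> (1+M) * \<rho> < 1 \<Longrightarrow> phi M \<rho> > 1 - \<alpha>"
proof -
  define g where "g \<rho> = (1 - \<alpha>) * ((1 - \<rho>) * (1 - \<rho> - M * \<rho>)) - M * \<rho>" for \<rho>
  have gid: "g \<rho> = (1 + M) * (1 - \<alpha>) * (1 - \<rho>)^2 - M * (1 - \<alpha> + \<alpha> * \<rho>)" for \<rho>
    by (simp add: g_def algebra_simps power2_eq_square)
  have g0: "g r0 = 0" using eq by (simp add: gid)
  have gd: "g \<rho> = (1 + M) * (1 - \<alpha>) * ((1 - \<rho>)^2 - (1 - r0)^2) + M * \<alpha> * (r0 - \<rho>)" for \<rho>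
    using g0 by (simp add: gid algebra_simps)
  have c1: "(1 + M) * (1 - \<alpha>) > 0" using M a by simp
  show r0b: "(1+M) * r0 < 1"
  proof (rule ccontr)
    assume "\<not> (1+M) * r0 < 1"
    hence "1 - r0 - M * r0 \<le> 0" by (simp add: algebra_simps)
    moreover have "(1 - \<alpha>) * (1 - r0) \<ge> 0" using a r by simp
    ultimately have "(1 - \<alpha>) * (1 - r0) * (1 - r0 - M * r0) \<le> 0"
      by (metis mult_nonneg_nonpos)
    moreover have "M * r0 > 0" using M r by simp
    ultimately show False using g0 by (simp add: g_def mult.assoc)
  qed
  show "phi M \<rho> \<le> 1 - \<alpha>" if "0 < \<rho>" "\<rho> \<le> r0" for \<rho>
  proof -
    have b: "(1+M) * \<rho> < 1" using that r0b M
      by (smt (verit) mult_left_mono)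
    have "(1 - \<rho>)^2 \<ge> (1 - r0)^2" using that r by (intro power_mono) auto
    hence "g \<rho> \<ge> 0" using gd[of \<rho>] c1 M a that
      by (smt (verit) mult_nonneg_nonneg)
    thus ?thesis using phi_cmp(1)[OF that(1) b] M by (simp add: g_def)
  qed
  show "phi M \<rho> < 1 - \<alpha>" if "0 < \<rho>" "\<rho> < r0" for \<rho>
  proof -
    have b: "(1+M) * \<rho> < 1" using that r0b M
      by (smt (verit) mult_left_mono)
    have "(1 - \<rho>)^2 > (1 - r0)^2" using that r by (intro power_strict_mono) auto
    hence "(1 + M) * (1 - \<alpha>) * ((1 - \<rho>)^2 - (1 - r0)^2) > 0" using c1 by simp
    hence "g \<rho> > 0" using gd[of \<rho>] M a that
      by (smt (verit) mult_nonneg_nonneg)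
    thus ?thesis using phi_cmp(2)[OF that(1) b] M by (simp add: g_def)
  qed
  show "phi M \<rho> > 1 - \<alpha>" if "r0 < \<rho>" "(1+M) * \<rho> < 1" for \<rho>
  proof -
    have p: "0 < \<rho>" using that r by simp
    have "M * \<rho> > 0" using M p by simp
    hence "\<rho> < 1" using that(2) by (simp add: algebra_simps)
    hence "(1 - \<rho>)^2 < (1 - r0)^2" using that r by (intro power_strict_mono) auto
    hence "(1 + M) * (1 - \<alpha>) * ((1 - \<rho>)^2 - (1 - r0)^2) < 0" using c1
      by (simp add: mult_pos_neg)
    moreover have "M * \<alpha> * (r0 - \<rho>) \<le> 0" using M a that
      by (intro mult_nonneg_nonpos) auto
    ultimately have "g \<rho> < 0" using gd[of \<rho>] by linarith
    thus ?thesis using phi_cmp(1)[OF p that(2)] M by (simp add: g_def not_le[symmetric])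
  qed
qed

definition ext :: "real \<Rightarrow> complex \<Rightarrow> complex" where
  "ext M z = of_real M + (1 + of_real M) * z - of_real M * inverse (1 - z)"

lemma inv1: "inverse (1 - fps_X :: complex fps) = Abs_fps (\<lambda>n. 1)"
  by (metis fps_inverse_gp' fps_inverse_idempotent fps_nth_Abs_fps one_neq_zero)

lemma ext_class:
  assumes M: "M \<ge> 0"
  shows "ext M \<in> coeff_bounded_class M"
proof -
  define F where "F = fps_const (of_real M) + fps_const (1 + of_real M) * fps_X - fps_const (of_real M) * inverse (1 - fps_X :: complex fps)"
  have H: "ext M has_fps_expansion F"
    unfolding ext_def F_def by (intro fps_expansion_intros) auto
  have Fn: "fps_nth F n = (if n = 0 then 0 else if n = 1 then 1 else - of_real M)" for n
    by (auto simp: F_def inv1)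
  have holo: "ext M holomorphic_on ball 0 1"
    unfolding ext_def by (intro holomorphic_intros) auto
  have e0: "ext M 0 = 0" by (simp add: ext_def)
  have d1: "deriv (ext M) 0 = 1"
    using fps_nth_fps_expansion[OF H, of 1] Fn[of 1] by simp
  have dn: "norm ((deriv ^^ n) (ext M) 0 / of_nat (fact n)) \<le> M" if "n \<ge> 2" for n
  proof -
    have "(deriv ^^ n) (ext M) 0 / of_nat (fact n) = fps_nth F n"
      using fps_nth_fps_expansion[OF H, of n] by simp
    also have "\<dots> = - of_real M" using that Fn[of n] by simp
    finally show ?thesis using M by simp
  qed
  show ?thesis using holo e0 d1 dn by (simp add: coeff_bounded_class_def)
qed

lemma aux: "(u::real) \<noteq> 0 \<Longrightarrow> w \<noteq> 0 \<Longrightarrow> \<rho> \<noteq> 0 \<Longrightarrow>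
   \<rho> * ((1+M) - M/u^2) / (\<rho>*w/u) = ((1+M)*u^2 - M)/(u*w)"
  by (simp add: field_simps power2_eq_square)

lemma ext_val:
  assumes M: "M \<ge> 0" and r: "0 < \<rho>" "(1+M) * \<rho> < 1"
  shows "ext M (of_real \<rho>) \<noteq> 0 \<and> starq (ext M) (of_real \<rho>) = of_real (1 - phi M \<rho>)"
proof -
  have "M * \<rho> \<ge> 0" using M r by simp
  moreover have d2: "1 - \<rho> - M * \<rho> > 0" using r(2) by (simp add: algebra_simps)
  ultimately have d1: "1 - \<rho> > 0" by linarith
  define Fv where "Fv = M + (1 + M) * \<rho> - M / (1 - \<rho>)"
  define Dv where "Dv = (1 + M) - M / (1 - \<rho>)^2"
  have Fe: "Fv = \<rho> * (1 - \<rho> - M * \<rho>) / (1 - \<rho>)"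
    using d1 by (simp add: Fv_def field_simps)
  have Fnz: "Fv \<noteq> 0" using Fe d1 d2 r by simp
  have ev: "ext M (of_real \<rho>) = of_real Fv"
    by (simp add: ext_def Fv_def divide_inverse)
  have "((ext M) has_field_derivative (1 + of_real M - of_real M / (1 - of_real \<rho>)^2)) (at (of_real \<rho>))"
  proof -
    have ne: "1 - complex_of_real \<rho> \<noteq> 0"
    proof
      assume "1 - complex_of_real \<rho> = 0"
      hence "complex_of_real (1 - \<rho>) = 0" by simp
      thus False using d1 by (simp del: of_real_diff)
    qed
    show ?thesis unfolding ext_def
      apply (rule derivative_eq_intros refl)+
      using ne apply (simp_all add: power2_eq_square)
      by (metis divide_inverse inverse_mult_distrib mult.commute)
  qed
  hence "deriv (ext M) (of_real \<rho>) = 1 + of_real M - of_real M / (1 - of_real \<rho>)^2"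
    by (rule DERIV_imp_deriv)
  also have "\<dots> = of_real Dv" by (simp add: Dv_def)
  finally have dv: "deriv (ext M) (of_real \<rho>) = of_real Dv" .
  have "starq (ext M) (of_real \<rho>) = of_real (\<rho> * Dv / Fv)"
    using r by (simp add: starq_def dv ev)
  also have "\<rho> * Dv / Fv = 1 - phi M \<rho>"
  proof -
    have u: "1 - \<rho> \<noteq> 0" "(1 - \<rho>)^2 \<noteq> 0" "1 - \<rho> - M * \<rho> \<noteq> 0" "\<rho> \<noteq> 0" using d1 d2 r by auto
    have "\<rho> * Dv / Fv = ((1 + M) * (1 - \<rho>)^2 - M) / ((1 - \<rho>) * (1 - \<rho> - M * \<rho>))"
      unfolding Fe Dv_def using u aux by blast
    also have "(1 + M) * (1 - \<rho>)^2 - M = (1 - \<rho>) * (1 - \<rho> - M * \<rho>) - M * \<rho>"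
      by (simp add: algebra_simps power2_eq_square)
    also have "\<dots> / ((1 - \<rho>) * (1 - \<rho> - M * \<rho>)) = 1 - phi M \<rho>"
      unfolding phi_def using u by (simp add: diff_divide_distrib)
    finally show ?thesis .
  qed
  finally show ?thesis using ev Fnz by simp
qed

lemma bound_le:
  assumes f: "f \<in> coeff_bounded_class M" and M: "M > 0" and a: "0 \<le> \<alpha>" "\<alpha> < 1" and r: "0 < r0" "r0 < 1"
    and eq: "M * (1 - \<alpha> + \<alpha> * r0) = (1 + M) * (1 - \<alpha>) * (1 - r0)^2"
    and z: "norm z \<le> r0"
  shows "(z \<noteq> 0 \<longrightarrow> f z \<noteq> 0) \<and> norm (starq f z - 1) \<le> 1 - \<alpha>"
proof (cases "z = 0")
  case True thus ?thesis using a by (simp add: starq_def)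
next
  case False
  have "(1+M) * norm z \<le> (1+M) * r0" using z M by (intro mult_left_mono) auto
  hence b: "(1+M) * norm z < 1" using root(1)[OF M a r eq] by linarith
  have "phi M (norm z) \<le> 1 - \<alpha>" using root(2)[OF M a r eq, of "norm z"] False z by simp
  thus ?thesis using key[OF f False b] M False by (simp add: phi_def)
qed

lemma bound_lt:
  assumes f: "f \<in> coeff_bounded_class M" and M: "M > 0" and a: "0 \<le> \<alpha>" "\<alpha> < 1" and r: "0 < r0" "r0 < 1"
    and eq: "M * (1 - \<alpha> + \<alpha> * r0) = (1 + M) * (1 - \<alpha>) * (1 - r0)^2"
    and z: "norm z < r0"
  shows "(z \<noteq> 0 \<longrightarrow> f z \<noteq> 0) \<and> norm (starq f z - 1) < 1 - \<alpha>"
proof (cases "z = 0")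
  case True thus ?thesis using a by (simp add: starq_def)
next
  case False
  have "(1+M) * norm z \<le> (1+M) * r0" using z M by (intro mult_left_mono) auto
  hence b: "(1+M) * norm z < 1" using root(1)[OF M a r eq] by linarith
  have "phi M (norm z) < 1 - \<alpha>" using root(3)[OF M a r eq, of "norm z"] False z by simp
  thus ?thesis using key[OF f False b] M False by (simp add: phi_def)
qed

lemma sharp_pt:
  fixes M r0 r :: real
  assumes M: "M > 0" and "(1+M) * r0 < 1" "r0 < r"
  shows "\<exists>\<rho>. r0 < \<rho> \<and> \<rho> < r \<and> (1+M) * \<rho> < 1"
proof -
  have "r0 < 1 / (1+M)" using assms by (simp add: field_simps)
  define \<rho> where "\<rho> = min ((r0 + r)/2) ((r0 + 1/(1+M))/2)"
  have "\<rho> \<le> (r0 + r)/2" "\<rho> \<le> (r0 + 1/(1+M))/2" "r0 < \<rho>"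
    using assms \<open>r0 < 1 / (1+M)\<close> unfolding \<rho>_def by (auto simp del: divide_le_eq_numeral1 le_divide_eq_numeral1)
  have "(r0 + r)/2 < r" "(r0 + 1/(1+M))/2 < 1/(1+M)" using assms \<open>r0 < 1 / (1+M)\<close> by simp_all
  hence "r0 < \<rho>" "\<rho> < r" "\<rho> < 1/(1+M)" using \<open>\<rho> \<le> (r0 + r)/2\<close> \<open>\<rho> \<le> (r0 + 1/(1+M))/2\<close> \<open>r0 < \<rho>\<close> by linarith+
  moreover have "(1+M) * \<rho> < 1" using \<open>\<rho> < 1/(1+M)\<close> M by (simp add: field_simps)
  ultimately show ?thesis by blast
qed

lemma re_ge: "Re w \<ge> 1 - norm (w - 1)"
  using abs_Re_le_cmod[of "w - 1"] by simp

theorem corollary2p6: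
  fixes M \<alpha> r0 r1 :: real
  assumes "M > 0" and "0 \<le> \<alpha>" and "\<alpha> < 1"
    and "0 < r0" and "r0 < 1"
    and "M * (1 - \<alpha> + \<alpha> * r0) = (1 + M) * (1 - \<alpha>) * (1 - r0)^2"
    and "0 < r1" and "r1 < 1"
    and "M * (1 - 1/2 + 1/2 * r1) = (1 + M) * (1 - 1/2) * (1 - r1)^2"
  shows "(\<forall>f\<in>coeff_bounded_class M. \<forall>z. norm z \<le> r0 \<longrightarrow>
            (z \<noteq> 0 \<longrightarrow> f z \<noteq> 0) \<and> norm (starq f z - 1) \<le> 1 - \<alpha>)
       \<and> (\<forall>r>r0. \<exists>f\<in>coeff_bounded_class M. \<exists>z. norm z < 1 \<and> norm z \<le> r \<and>
            \<not> ((z \<noteq> 0 \<longrightarrow> f z \<noteq> 0) \<and> norm (starq f z - 1) \<le> 1 - \<alpha>))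
       \<and> radius_starlike \<alpha> (coeff_bounded_class M) = r0
       \<and> radius_parabolic (coeff_bounded_class M) = r1"
proof -
  note M = assms(1) and a = assms(2,3) and r = assms(4,5) and eq = assms(6)
  have a2: "0 \<le> (1/2::real)" "(1/2::real) < 1" by auto
  note r' = assms(7,8) and eq' = assms(9)
  have M0: "M \<ge> 0" using M by simp
  have ec: "ext M \<in> coeff_bounded_class M" using ext_class M0 .
  have rb: "(1+M) * r0 < 1" by (rule root(1)[OF M a r eq])
  have rb': "(1+M) * r1 < 1" by (rule root(1)[OF M a2 r' eq'])
  have lt1: "\<rho> < 1" if "0 < \<rho>" "(1+M) * \<rho> < 1" for \<rho>
  proof -
    have "M * \<rho> > 0" using M that by simp
    thus ?thesis using that(2) by (simp add: algebra_simps)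
  qed
  have P1: "\<forall>f\<in>coeff_bounded_class M. \<forall>z. norm z \<le> r0 \<longrightarrow>
            (z \<noteq> 0 \<longrightarrow> f z \<noteq> 0) \<and> norm (starq f z - 1) \<le> 1 - \<alpha>"
    using bound_le[OF _ M a r eq] by blast
  have P2: "\<forall>r>r0. \<exists>f\<in>coeff_bounded_class M. \<exists>z. norm z < 1 \<and> norm z \<le> r \<and>
            \<not> ((z \<noteq> 0 \<longrightarrow> f z \<noteq> 0) \<and> norm (starq f z - 1) \<le> 1 - \<alpha>)"
  proof (intro allI impI)
    fix r assume "r > r0"
    then obtain \<rho> where \<rho>: "r0 < \<rho>" "\<rho> < r" "(1+M) * \<rho> < 1" using sharp_pt[OF M rb] by blast
    have p: "0 < \<rho>" using \<rho> r by simp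
    have v: "starq (ext M) (of_real \<rho>) = of_real (1 - phi M \<rho>)" using ext_val[OF M0 p \<rho>(3)] by simp
    have g: "phi M \<rho> > 1 - \<alpha>" using root(4)[OF M a r eq \<rho>(1,3)] .
    have "norm (starq (ext M) (of_real \<rho>) - 1) > 1 - \<alpha>"
    proof -
      have "starq (ext M) (of_real \<rho>) - 1 = of_real (- phi M \<rho>)" using v by simp
      hence "norm (starq (ext M) (of_real \<rho>) - 1) = \<bar>phi M \<rho>\<bar>" by (simp only: norm_of_real abs_minus)
      thus ?thesis using g a by simp
    qed
    moreover have "norm (complex_of_real \<rho>) < 1" "norm (complex_of_real \<rho>) \<le> r"
      using lt1[OF p \<rho>(3)] p \<rho> by auto
    ultimately show "\<exists>f\<in>coeff_bounded_class M. \<exists>z. norm z < 1 \<and> norm z \<le> r \<and>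
            \<not> ((z \<noteq> 0 \<longrightarrow> f z \<noteq> 0) \<and> norm (starq f z - 1) \<le> 1 - \<alpha>)"
      using ec by (intro bexI[of _ "ext M"] exI[of _ "complex_of_real \<rho>"]) auto
  qed
  have P3: "radius_starlike \<alpha> (coeff_bounded_class M) = r0"
    unfolding radius_starlike_def
  proof (rule cSup_eq_maximum)
    show "r0 \<in> {r. 0 < r \<and> r \<le> 1 \<and>
      (\<forall>f\<in>coeff_bounded_class M. (\<forall>z. 0 < norm z \<and> norm z < r \<longrightarrow> f z \<noteq> 0) \<and>
              (\<forall>z. norm z < r \<longrightarrow> Re (starq f z) > \<alpha>))}"
    proof (intro CollectI conjI ballI allI impI)
      show "0 < r0" "r0 \<le> 1" using r by auto
    next
      fix f :: "complex \<Rightarrow> complex" and z :: complex assume f: "f \<in> coeff_bounded_class M" and z: "0 < norm z \<and> norm z < r0"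
      thus "f z \<noteq> 0" using bound_lt[OF f M a r eq, of z] by auto
    next
      fix f :: "complex \<Rightarrow> complex" and z :: complex assume f: "f \<in> coeff_bounded_class M" and z: "norm z < r0"
      have "norm (starq f z - 1) < 1 - \<alpha>" using bound_lt[OF f M a r eq z] by auto
      thus "Re (starq f z) > \<alpha>" using re_ge[of "starq f z"] by linarith
    qed
  next
    fix x assume "x \<in> {r. 0 < r \<and> r \<le> 1 \<and>
      (\<forall>f\<in>coeff_bounded_class M. (\<forall>z. 0 < norm z \<and> norm z < r \<longrightarrow> f z \<noteq> 0) \<and>
              (\<forall>z. norm z < r \<longrightarrow> Re (starq f z) > \<alpha>))}"
    hence x: "\<And>z. norm z < x \<Longrightarrow> Re (starq (ext M) z) > \<alpha>" using ec by blast
    show "x \<le> r0"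
    proof (rule ccontr)
      assume "\<not> x \<le> r0"
      then obtain \<rho> where \<rho>: "r0 < \<rho>" "\<rho> < x" "(1+M) * \<rho> < 1" using sharp_pt[OF M rb] by force
      have p: "0 < \<rho>" using \<rho> r by simp
      have v: "starq (ext M) (of_real \<rho>) = of_real (1 - phi M \<rho>)" using ext_val[OF M0 p \<rho>(3)] by simp
      have g: "phi M \<rho> > 1 - \<alpha>" using root(4)[OF M a r eq \<rho>(1,3)] .
      have "Re (starq (ext M) (of_real \<rho>)) > \<alpha>" using x[of "of_real \<rho>"] \<rho> p by simp
      thus False using v g by simp
    qed
  qed
  have P4: "radius_parabolic (coeff_bounded_class M) = r1"
    unfolding radius_parabolic_def
  proof (rule cSup_eq_maximum)
    show "r1 \<in> {r. 0 < r \<and> r \<le> 1 \<and>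
      (\<forall>f\<in>coeff_bounded_class M. \<forall>z. norm z < r \<longrightarrow> Re (starq f z) > norm (starq f z - 1))}"
    proof (intro CollectI conjI ballI allI impI)
      show "0 < r1" "r1 \<le> 1" using r' by auto
    next
      fix f :: "complex \<Rightarrow> complex" and z :: complex assume f: "f \<in> coeff_bounded_class M" and z: "norm z < r1"
      have "norm (starq f z - 1) < 1 - 1/2" using bound_lt[OF f M a2 r' eq' z] by auto
      thus "Re (starq f z) > norm (starq f z - 1)" using re_ge[of "starq f z"] by linarith
    qed
  next
    fix x assume "x \<in> {r. 0 < r \<and> r \<le> 1 \<and>
      (\<forall>f\<in>coeff_bounded_class M. \<forall>z. norm z < r \<longrightarrow> Re (starq f z) > norm (starq f z - 1))}"
    hence x: "\<And>z. norm z < x \<Longrightarrow> Re (starq (ext M) z) > norm (starq (ext M) z - 1)" using ec by blast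
    show "x \<le> r1"
    proof (rule ccontr)
      assume "\<not> x \<le> r1"
      then obtain \<rho> where \<rho>: "r1 < \<rho>" "\<rho> < x" "(1+M) * \<rho> < 1" using sharp_pt[OF M rb'] by force
      have p: "0 < \<rho>" using \<rho> r' by simp
      have v: "starq (ext M) (of_real \<rho>) = of_real (1 - phi M \<rho>)" using ext_val[OF M0 p \<rho>(3)] by simp
      have g: "phi M \<rho> > 1 - 1/2" using root(4)[OF M a2 r' eq' \<rho>(1,3)] .
      have v1: "starq (ext M) (of_real \<rho>) - 1 = of_real (- phi M \<rho>)" using v by simp
      have "Re (starq (ext M) (of_real \<rho>)) > norm (starq (ext M) (of_real \<rho>) - 1)"
        using x[of "of_real \<rho>"] \<rho> p by simp
      hence "1 - phi M \<rho> > \<bar>phi M \<rho>\<bar>" unfolding v1 norm_of_real abs_minus using v by simp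
      thus False using g by simp
    qed
  qed
  show ?thesis using P1 P2 P3 P4 by blast
qed

end
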